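(* (Crossing lemma) Let $G=(U,V,E)$ be a path-restricted ordered bipartite graph. Let $U=U_1\cup U_2$ and $V=V_1\cup V_2$ be partitions such that every vertex of $U_1$ has higher order than every vertex of $U_2$ and every vertex of $V_1$ has higher order than every vertex of $V_2$. (1) If every vertex of $U_1$ has a neighbour in $V_1$, then the number of edges between $U_1$ and $V_2$ is at most $|U_1|+|V_2|$. (2) If every vertex of $V_1$ has a neighbour in $U_1$, then the number of edges between $V_1$ and $U_2$ is at most $|V_1|+|U_2|$.
   Context: An ordered bipartite graph is $G=(U,V,E)$ where $U,V$ are disjoint finite sets, each carrying a strict total order (both written $<$), and $E\subseteq U\times V$. A path is a sequence of edges in which consecutive edges share a vertex. A path visiting the vertices of $U$ in the order $u_1,\dots,u_k$ and those of $V$ in the order $v_1,\dots,v_l$ is a forward path if either $u_1<\dots<u_k$ and $v_1<\dots<v_l$, or $u_1>\dots>u_k$ and $v_1>\dots>v_l$. For $x\le y$ in $U$ write $\langle x,y\rangle=\{u\in U: x\le u\le y\}$, and similarly in $V$. If $u_a<u_b$ are the smallest and largest $U$-vertices and $v_c<v_d$ the smallest and largest $V$-vertices of a forward path $P$, the range of $P$ is $\{\langle u_a,u_b\rangle,\langle v_c,v_d\rangle\}$. A vertex of $P$ is non-terminal if it is adjacent along $P$ to two vertices of $P$. An edge is a back edge to $P$ if either it is $(u_a,v_j)$ with $v_j\in\langle v_c,v_d\rangle$ and $v_j>v'$ for some non-terminal vertex $v'\in V$ of $P$, or it is $(u_i,v_c)$ with $u_i\in\langle u_a,u_b\rangle$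 and $u_i>u'$ for some non-terminal vertex $u'\in U$ of $P$. $G$ is a path-restricted ordered bipartite graph (PRBG) if no forward path in $G$ has a back edge in $E$. (In the paper's drawings vertices are placed from right to left in increasing order, so $U_1,V_1$ lie to the left and $U_2,V_2$ to the right of a separating line.) *)

theory Defs
  imports Main
begin

(* Vertices of an ordered bipartite graph: U-vertices have type 'u, V-vertices type 'v
   (so U and V are disjoint); each type carries the strict total order <.
   A path is represented by its alternating vertex sequence (Inl u for u in U, Inr v for v in V). *)

definition adj :: "('u \<times> 'v) set \<Rightarrow> ('u + 'v) \<Rightarrow> ('u + 'v) \<Rightarrow> bool" where
  "adj E x y \<longleftrightarrow>
     (case (x, y) of (Inl u, Inr v) \<Rightarrow> (u, v) \<in> E
                   | (Inr v, Inl u) \<Rightarrow> (u, v) \<in> E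
                   | _ \<Rightarrow> False)"

definition is_path :: "('u \<times> 'v) set \<Rightarrow> ('u + 'v) list \<Rightarrow> bool" where
  "is_path E p \<longleftrightarrow> 2 \<le> length p \<and> (\<forall>i. Suc i < length p \<longrightarrow> adj E (p ! i) (p ! Suc i))"

definition Uverts :: "('u + 'v) list \<Rightarrow> 'u list" where
  "Uverts p = map projl (filter isl p)"

definition Vverts :: "('u + 'v) list \<Rightarrow> 'v list" where
  "Vverts p = map projr (filter (\<lambda>x. \<not> isl x) p)"

definition forward_path :: "('u::linorder \<times> 'v::linorder) set \<Rightarrow> ('u + 'v) list \<Rightarrow> bool" where
  "forward_path E p \<longleftrightarrow> is_path E p \<and>
     ((sorted_wrt (<) (Uverts p) \<and> sorted_wrt (<) (Vverts p)) \<or>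
      (sorted_wrt (>) (Uverts p) \<and> sorted_wrt (>) (Vverts p)))"

definition non_terminal :: "('u + 'v) list \<Rightarrow> ('u + 'v) \<Rightarrow> bool" where
  "non_terminal p x \<longleftrightarrow> (\<exists>i. 0 < i \<and> Suc i < length p \<and> p ! i = x)"

definition back_edge :: "('u::linorder + 'v::linorder) list \<Rightarrow> ('u \<times> 'v) \<Rightarrow> bool" where
  "back_edge p e \<longleftrightarrow>
     (let ua = Min (set (Uverts p)); ub = Max (set (Uverts p));
          vc = Min (set (Vverts p)); vd = Max (set (Vverts p));
          u = fst e; v = snd e
      in (u = ua \<and> vc \<le> v \<and> v \<le> vd \<and> (\<exists>v'. non_terminal p (Inr v') \<and> v' < v)) \<or>
         (v = vc \<and> ua \<le> u \<and> u \<le> ub \<and> (\<exists>u'. non_terminal p (Inl u') \<and> u' < u)))"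

definition PRBG :: "'u::linorder set \<Rightarrow> 'v::linorder set \<Rightarrow> ('u \<times> 'v) set \<Rightarrow> bool" where
  "PRBG U V E \<longleftrightarrow> finite U \<and> finite V \<and> E \<subseteq> U \<times> V \<and>
     \<not> (\<exists>p e. forward_path E p \<and> e \<in> E \<and> back_edge p e)"

end

theory Submission
  imports Defs
begin

lemma no1:
  fixes u u' :: "'u::linorder" and v v' w :: "'v::linorder"
  assumes P: "PRBG U V E"
    and e: "(u,v)\<in>E" "(u',v)\<in>E" "(u',w)\<in>E" "(u,v')\<in>E"
    and o: "u<u'" "v<v'" "v'\<le>w"
  shows False
proof -
  let ?p = "[Inl u, Inr v, Inl u', Inr w] :: ('u + 'v) list"
  have up: "Uverts ?p = [u,u']" by (simp add: Uverts_def)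
  have vp: "Vverts ?p = [v,w]" by (simp add: Vverts_def)
  have fp: "forward_path E ?p"
    unfolding forward_path_def is_path_def up vp using e o
    by (auto simp: adj_def nth_Cons split: nat.splits)
  have nt: "non_terminal ?p (Inr v)" unfolding non_terminal_def
    by (rule exI[of _ 1]) simp
  have "back_edge ?p (u,v')" unfolding back_edge_def up vp Let_def
    using nt o by auto
  with fp e P show False unfolding PRBG_def by blast
qed

lemma no2:
  fixes u u' w :: "'u::linorder" and v v' :: "'v::linorder"
  assumes P: "PRBG U V E"
    and e: "(u,v)\<in>E" "(u,v')\<in>E" "(w,v')\<in>E" "(u',v)\<in>E"
    and o: "u<u'" "u'\<le>w" "v<v'"
  shows False
proof -
  let ?p = "[Inr v, Inl u, Inr v', Inl w] :: ('u + 'v) list"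
  have up: "Uverts ?p = [u,w]" by (simp add: Uverts_def)
  have vp: "Vverts ?p = [v,v']" by (simp add: Vverts_def)
  have fp: "forward_path E ?p"
    unfolding forward_path_def is_path_def up vp using e o
    by (auto simp: adj_def nth_Cons split: nat.splits)
  have nt: "non_terminal ?p (Inl u)" unfolding non_terminal_def
    by (rule exI[of _ 1]) simp
  have "back_edge ?p (u',v)" unfolding back_edge_def up vp Let_def
    using nt o by auto
  with fp e P show False unfolding PRBG_def by blast
qed

lemma count_lemma:
  fixes S :: "('u::linorder \<times> 'v::linorder) set"
  assumes fin: "finite S" and X: "fst ` S \<subseteq> X" and Y: "snd ` S \<subseteq> Y"
    and fX: "finite X" and fY: "finite Y"
    and cov: "\<And>u v u' v'. (u,v)\<in>S \<Longrightarrow> (u,v')\<in>S \<Longrightarrow> (u',v)\<in>S \<Longrightarrow> v<v' \<Longrightarrow> u<u' \<Longrightarrow> False"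
  shows "card S \<le> card X + card Y"
proof -
  define A where "A = {(u,v)\<in>S. \<forall>v'. (u,v')\<in>S \<longrightarrow> v' \<le> v}"
  define B where "B = {(u,v)\<in>S. \<forall>u'. (u',v)\<in>S \<longrightarrow> u' \<le> u}"
  have sub: "S \<subseteq> A \<union> B"
  proof
    fix x assume x: "x \<in> S"
    obtain u v where xe: "x = (u,v)" by force
    show "x \<in> A \<union> B"
    proof (rule ccontr)
      assume "x \<notin> A \<union> B"
      then obtain v' u' where "(u,v')\<in>S" "\<not> v' \<le> v" "(u',v)\<in>S" "\<not> u' \<le> u"
        using x xe unfolding A_def B_def by auto
      then show False using cov[of u v v' u'] x xe by force
    qed
  qed
  have "inj_on fst A" unfolding A_def inj_on_def by (auto intro: order_antisym)
  hence cA: "card A \<le> card X"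
    using card_inj_on_le[of fst A X] X fX unfolding A_def by auto
  have "inj_on snd B" unfolding B_def inj_on_def by (auto intro: order_antisym)
  hence cB: "card B \<le> card Y"
    using card_inj_on_le[of snd B Y] Y fY unfolding B_def by auto
  have fA: "finite A" "finite B" using fin unfolding A_def B_def
    by (auto intro: finite_subset[of _ S])
  have "card S \<le> card (A \<union> B)" using sub fA by (intro card_mono) auto
  also have "\<dots> \<le> card A + card B" by (rule card_Un_le)
  finally show ?thesis using cA cB by simp
qed

theorem lemma7:
  fixes U U1 U2 :: "'u::linorder set" and V V1 V2 :: "'v::linorder set"
    and E :: "('u \<times> 'v) set"
  assumes "PRBG U V E"
    and "U = U1 \<union> U2" and "U1 \<inter> U2 = {}"
    and "V = V1 \<union> V2" and "V1 \<inter> V2 = {}"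
    and "\<forall>x\<in>U1. \<forall>y\<in>U2. y < x"
    and "\<forall>x\<in>V1. \<forall>y\<in>V2. y < x"
  shows "((\<forall>u\<in>U1. \<exists>v\<in>V1. (u, v) \<in> E) \<longrightarrow>
            card {(u, v) \<in> E. u \<in> U1 \<and> v \<in> V2} \<le> card U1 + card V2)
       \<and> ((\<forall>v\<in>V1. \<exists>u\<in>U1. (u, v) \<in> E) \<longrightarrow>
            card {(u, v) \<in> E. v \<in> V1 \<and> u \<in> U2} \<le> card V1 + card U2)"
proof -
  have fU: "finite U" and fV: "finite V" and EUV: "E \<subseteq> U \<times> V"
    using assms(1) unfolding PRBG_def by auto
  have fE: "finite E" using EUV fU fV finite_subset by blast
  have f1: "finite U1" "finite U2" "finite V1" "finite V2" using fU fV assms(2,4) by auto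
  show ?thesis
  proof (intro conjI impI)
    assume h: "\<forall>u\<in>U1. \<exists>v\<in>V1. (u, v) \<in> E"
    show "card {(u, v) \<in> E. u \<in> U1 \<and> v \<in> V2} \<le> card U1 + card V2"
    proof (rule count_lemma)
      show "finite {(u, v) \<in> E. u \<in> U1 \<and> v \<in> V2}" using fE by (auto intro: finite_subset)
      fix u v u' v'
      assume a: "(u,v) \<in> {(u, v) \<in> E. u \<in> U1 \<and> v \<in> V2}"
        "(u,v') \<in> {(u, v) \<in> E. u \<in> U1 \<and> v \<in> V2}"
        "(u',v) \<in> {(u, v) \<in> E. u \<in> U1 \<and> v \<in> V2}" "v<v'" "u<u'"
      then obtain w where w: "w \<in> V1" "(u',w)\<in>E" using h by auto
      have "v' \<le> w" using assms(7) w a by (auto intro: less_imp_le)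
      then show False using no1[OF assms(1), of u v u' w v'] a w by auto
    qed (use f1 in auto)
  next
    assume h: "\<forall>v\<in>V1. \<exists>u\<in>U1. (u, v) \<in> E"
    show "card {(u, v) \<in> E. v \<in> V1 \<and> u \<in> U2} \<le> card V1 + card U2"
    proof -
      have "card {(u, v) \<in> E. v \<in> V1 \<and> u \<in> U2} \<le> card U2 + card V1"
      proof (rule count_lemma)
        show "finite {(u, v) \<in> E. v \<in> V1 \<and> u \<in> U2}" using fE by (auto intro: finite_subset)
        fix u v u' v'
        assume a: "(u,v) \<in> {(u, v) \<in> E. v \<in> V1 \<and> u \<in> U2}"
          "(u,v') \<in> {(u, v) \<in> E. v \<in> V1 \<and> u \<in> U2}"
          "(u',v) \<in> {(u, v) \<in> E. v \<in> V1 \<and> u \<in> U2}" "v<v'" "u<u'"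
        then obtain w where w: "w \<in> U1" "(w,v')\<in>E" using h by auto
        have "u' \<le> w" using assms(6) w a by (simp add: less_imp_le)
        then show False using no2[OF assms(1), of u v v' w u'] a w by auto
      qed (use f1 in auto)
      thus ?thesis by simp
    qed
  qed
qed

end
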